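(* Let $n\ge 2$ and let $p=a_1a_2\cdots a_n$ be a permutation of $\{1,\dots,n\}$ such that $a_{j+1}=a_j+1$ for some $j\in\{1,\dots,n-1\}$. Let $\hat p|_{\{a_j\}}$ denote the permutation of $\{1,\dots,n-1\}$ that is order-isomorphic to the sequence obtained from $p$ by deleting the entry $a_j$. Then $p$ is achievable by two stacks in series if and only if $\hat p|_{\{a_j\}}$ is achievable by two stacks in series.
   Context: Two stacks in series: a machine with an input stream, a first stack, a second stack and an output stream, with three moves: $\rho$ moves the next element of the input onto the top of the first stack; $\lambda$ moves the top element of the first stack onto the top of the second stack; $\mu$ moves the top element of the second stack to the end of the output. A permutation $q$ of $\{1,\dots,m\}$ is achievable if, starting with input $1,2,\dots,m$ (in this order) and both stacks empty, some finite sequence of these moves ends with empty input, empty stacks, and output equal to $q$. *)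

theory Defs
  imports Main
begin

text \<open>Configurations of the machine: (input, first stack, second stack, output).
  Stacks are lists whose head is the top element.\<close>
type_synonym config = "nat list \<times> nat list \<times> nat list \<times> nat list"

inductive move :: "config \<Rightarrow> config \<Rightarrow> bool" where
  rho: "move (x # inp, s1, s2, out) (inp, x # s1, s2, out)"
| lambda: "move (inp, x # s1, s2, out) (inp, s1, x # s2, out)"
| mu: "move (inp, s1, x # s2, out) (inp, s1, s2, out @ [x])"

definition achievable :: "nat list \<Rightarrow> bool" where
  "achievable q \<longleftrightarrow> move\<^sup>*\<^sup>* ([1..<length q + 1], [], [], []) ([], [], [], q)"

definition is_perm :: "nat \<Rightarrow> nat list \<Rightarrow> bool" where
  "is_perm n p \<longleftrightarrow> length p = n \<and> distinct p \<and> set p = {1..n}"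

definition order_iso :: "nat list \<Rightarrow> nat list \<Rightarrow> bool" where
  "order_iso xs ys \<longleftrightarrow> length xs = length ys \<and>
     (\<forall>i < length xs. \<forall>k < length xs. xs ! i < xs ! k \<longleftrightarrow> ys ! i < ys ! k)"

end

theory Submission
  imports Defs
begin

definition reach :: "nat list \<Rightarrow> nat list \<Rightarrow> bool" where
  "reach i o' \<longleftrightarrow> move\<^sup>*\<^sup>* (i, [], [], []) ([], [], [], o')"

fun mapc :: "(nat \<Rightarrow> nat) \<Rightarrow> config \<Rightarrow> config" where
  "mapc f (i, a, b, c) = (map f i, map f a, map f b, map f c)"

lemma move_map: "move c c' \<Longrightarrow> move (mapc f c) (mapc f c')"
  by (induction rule: move.induct) (auto intro: move.intros)

lemma star_map: "move\<^sup>*\<^sup>* c c' \<Longrightarrow> move\<^sup>*\<^sup>* (mapc f c) (mapc f c')"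
proof (induction rule: rtranclp_induct)
  case base then show ?case by simp
next
  case (step y z) then show ?case using move_map
    by (meson rtranclp.rtrancl_into_rtrancl)
qed

lemma reach_map: "reach i o' \<Longrightarrow> reach (map f i) (map f o')"
  unfolding reach_def using star_map[where f=f] by fastforce

fun delc :: "nat \<Rightarrow> config \<Rightarrow> config" where
  "delc v (i, a, b, c) = (filter (\<lambda>x. x \<noteq> v) i, filter (\<lambda>x. x \<noteq> v) a,
     filter (\<lambda>x. x \<noteq> v) b, filter (\<lambda>x. x \<noteq> v) c)"

lemma move_del: "move c c' \<Longrightarrow> delc v c = delc v c' \<or> move (delc v c) (delc v c')"
  by (induction rule: move.induct) (auto intro: move.intros)

lemma star_del: "move\<^sup>*\<^sup>* c c' \<Longrightarrow> move\<^sup>*\<^sup>* (delc v c) (delc v c')"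
proof (induction rule: rtranclp_induct)
  case base then show ?case by simp
next
  case (step y z) then show ?case using move_del[of y z v]
    by (metis rtranclp.rtrancl_into_rtrancl)
qed

lemma reach_del: "reach i o' \<Longrightarrow> reach (filter (\<lambda>x. x \<noteq> v) i) (filter (\<lambda>x. x \<noteq> v) o')"
  unfolding reach_def using star_del[where v=v] by fastforce

definition F :: "nat \<Rightarrow> nat \<Rightarrow> nat list \<Rightarrow> nat list" where
  "F v u xs = concat (map (\<lambda>x. if x = u then [v, u] else [x]) xs)"
definition R :: "nat \<Rightarrow> nat \<Rightarrow> nat list \<Rightarrow> nat list" where
  "R v u xs = concat (map (\<lambda>x. if x = u then [u, v] else [x]) xs)"

fun dupc :: "nat \<Rightarrow> nat \<Rightarrow> config \<Rightarrow> config" where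
  "dupc v u (i, a, b, c) = (F v u i, R v u a, F v u b, F v u c)"

lemma two: "move a b \<Longrightarrow> move b c \<Longrightarrow> move\<^sup>*\<^sup>* a c"
  by (meson converse_rtranclp_into_rtranclp r_into_rtranclp)

lemma move_dup: "move c c' \<Longrightarrow> move\<^sup>*\<^sup>* (dupc v u c) (dupc v u c')"
proof (induction rule: move.induct)
  case (rho x inp s1 s2 out)
  show ?case
  proof (cases "x = u")
    case True
    have "move (v # u # F v u inp, R v u s1, F v u s2, F v u out) (u # F v u inp, v # R v u s1, F v u s2, F v u out)"
      by (rule move.rho)
    moreover have "move (u # F v u inp, v # R v u s1, F v u s2, F v u out) (F v u inp, u # v # R v u s1, F v u s2, F v u out)"
      by (rule move.rho)
    ultimately show ?thesis using True by (simp add: F_def R_def two)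
  next
    case False then show ?thesis by (auto simp: F_def R_def intro: move.intros)
  qed
next
  case (lambda inp x s1 s2 out)
  show ?case
  proof (cases "x = u")
    case True
    have "move (F v u inp, u # v # R v u s1, F v u s2, F v u out) (F v u inp, v # R v u s1, u # F v u s2, F v u out)"
      by (rule move.lambda)
    moreover have "move (F v u inp, v # R v u s1, u # F v u s2, F v u out) (F v u inp, R v u s1, v # u # F v u s2, F v u out)"
      by (rule move.lambda)
    ultimately show ?thesis using True by (simp add: F_def R_def two)
  next
    case False then show ?thesis by (auto simp: F_def R_def intro: move.intros)
  qed
next
  case (mu inp s1 x s2 out)
  show ?case
  proof (cases "x = u")
    case True
    have "move (F v u inp, R v u s1, v # u # F v u s2, F v u out) (F v u inp, R v u s1, u # F v u s2, F v u out @ [v])"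
      by (rule move.mu)
    moreover have "move (F v u inp, R v u s1, u # F v u s2, F v u out @ [v]) (F v u inp, R v u s1, F v u s2, F v u out @ [v] @ [u])"
      using move.mu by (metis append.assoc)
    ultimately show ?thesis using True by (simp add: F_def R_def two)
  next
    case False
    have "move (F v u inp, R v u s1, x # F v u s2, F v u out) (F v u inp, R v u s1, F v u s2, F v u out @ [x])"
      by (rule move.mu)
    then show ?thesis using False by (auto simp: F_def R_def)
  qed
qed

lemma star_dup: "move\<^sup>*\<^sup>* c c' \<Longrightarrow> move\<^sup>*\<^sup>* (dupc v u c) (dupc v u c')"
proof (induction rule: rtranclp_induct)
  case base then show ?case by simp
next
  case (step y z) then show ?case using move_dup[of y z v u]
    by (metis rtranclp_trans)
qed

lemma reach_dup: "reach i o' \<Longrightarrow> reach (F v u i) (F v u o')"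
  unfolding reach_def using star_dup[where v=v and u=u] by (fastforce simp: F_def R_def)

lemma F_id: "u \<notin> set xs \<Longrightarrow> F v u xs = xs"
  by (induction xs) (auto simp: F_def)

lemma del_dup:
  assumes "distinct (a @ v # u # b)"
  shows "filter (\<lambda>x. x \<noteq> v) (a @ v # u # b) = a @ u # b \<and> F v u (a @ u # b) = a @ v # u # b"
proof -
  have "v \<notin> set a" "v \<notin> set b" "u \<notin> set a" "u \<notin> set b" "u \<noteq> v" using assms by auto
  show ?thesis
  proof
    have "filter (\<lambda>x. x \<noteq> v) a = a" "filter (\<lambda>x. x \<noteq> v) b = b"
      using \<open>v \<notin> set a\<close> \<open>v \<notin> set b\<close> by (auto simp: filter_id_conv)
    then show "filter (\<lambda>x. x \<noteq> v) (a @ v # u # b) = a @ u # b" using \<open>u \<noteq> v\<close> by simp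
    have "F v u a = a" "F v u b = b" using \<open>u \<notin> set a\<close> \<open>u \<notin> set b\<close> by (auto simp: F_id)
    then show "F v u (a @ u # b) = a @ v # u # b" by (simp add: F_def)
  qed
qed

lemma upt_split: "i \<le> j \<Longrightarrow> j \<le> k \<Longrightarrow> [i..<k] = [i..<j] @ [j..<k]"
  by (metis le_add_diff_inverse upt_add_eq_append)

lemma rank_card:
  assumes "distinct xs"
  shows "card {k. k < length xs \<and> xs ! k < y} = card {z \<in> set xs. z < y}"
proof -
  have "{z \<in> set xs. z < y} = nth xs ` {k. k < length xs \<and> xs ! k < y}"
    by (auto simp: in_set_conv_nth)
  moreover have "inj_on (nth xs) {k. k < length xs \<and> xs ! k < y}"
    using assms by (simp add: inj_on_nth)
  ultimately show ?thesis by (simp add: card_image)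
qed

lemma iso_eq:
  assumes "distinct xs" "distinct ys" "set xs = set ys" "order_iso xs ys"
  shows "xs = ys"
proof (rule nth_equalityI)
  show l: "length xs = length ys" using assms(4) by (simp add: order_iso_def)
  fix i assume i: "i < length xs"
  have key: "card {z \<in> set xs. z < xs ! i} = card {z \<in> set xs. z < ys ! i}"
  proof -
    have "card {z \<in> set xs. z < xs ! i} = card {k. k < length xs \<and> xs ! k < xs ! i}"
      using rank_card[OF assms(1)] by simp
    also have "{k. k < length xs \<and> xs ! k < xs ! i} = {k. k < length ys \<and> ys ! k < ys ! i}"
      using assms(4) i l unfolding order_iso_def by auto
    also have "card \<dots> = card {z \<in> set ys. z < ys ! i}"
      using rank_card[OF assms(2)] by simp
    finally show ?thesis using assms(3) by simp
  qed
  have ax: "xs ! i \<in> set xs" using i by simp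
  have ay: "ys ! i \<in> set xs" using i l assms(3) by (metis nth_mem)
  show "xs ! i = ys ! i"
  proof (rule ccontr)
    assume ne: "xs ! i \<noteq> ys ! i"
    show False
    proof (cases "xs ! i < ys ! i")
      case True
      have "{z \<in> set xs. z < xs ! i} \<subset> {z \<in> set xs. z < ys ! i}"
        using True ax by auto
      then have "card {z \<in> set xs. z < xs ! i} < card {z \<in> set xs. z < ys ! i}"
        by (simp add: psubset_card_mono)
      then show False using key by simp
    next
      case False
      then have F: "ys ! i < xs ! i" using ne by simp
      have "{z \<in> set xs. z < ys ! i} \<subset> {z \<in> set xs. z < xs ! i}"
        using F ay by auto
      then have "card {z \<in> set xs. z < ys ! i} < card {z \<in> set xs. z < xs ! i}"
        by (simp add: psubset_card_mono)
      then show False using key by simp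
    qed
  qed
qed

theorem mainTheorem1:
  fixes n j :: nat and p q :: "nat list"
  assumes "n \<ge> 2"
    and "is_perm n p"
    and "j + 1 < n" and "p ! (j + 1) = p ! j + 1"
    and "is_perm (n - 1) q"
    and "order_iso q (take j p @ drop (j + 1) p)"
  shows "achievable p \<longleftrightarrow> achievable q"
proof -
  define v where "v = p ! j"
  define u where "u = p ! (j + 1)"
  define p' where "p' = take j p @ drop (j + 1) p"
  define g where "g = (\<lambda>x::nat. if x < v then x else Suc x)"
  define h where "h = (\<lambda>x::nat. if x < v then x else x - 1)"
  have lp: "length p = n" and dp: "distinct p" and sp: "set p = {1..n}"
    using assms(2) by (auto simp: is_perm_def)
  have lq: "length q = n - 1" and dq: "distinct q" and sq: "set q = {1..n-1}"
    using assms(5) by (auto simp: is_perm_def)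
  have uv: "u = Suc v" using assms(4) by (simp add: u_def v_def)
  have vin: "v \<in> {1..n}" using sp lp assms(3) v_def by (metis nth_mem less_imp_le_nat Suc_lessD add_lessD1 add.commute add_lessD1)
  have uin: "u \<in> {1..n}" using sp lp assms(3) u_def by (metis nth_mem)
  have v1: "1 \<le> v" and un: "Suc v \<le> n" using vin uin uv by auto
  have pdec: "p = take j p @ v # u # drop (j + 2) p"
  proof -
    have "drop j p = v # drop (Suc j) p" using assms(3) lp by (simp add: v_def Cons_nth_drop_Suc)
    moreover have "drop (Suc j) p = u # drop (Suc (Suc j)) p" using assms(3) lp
      by (simp add: u_def Cons_nth_drop_Suc)
    ultimately show ?thesis by (metis append_take_drop_id add_2_eq_Suc')
  qed
  have p'dec: "p' = take j p @ u # drop (j + 2) p"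
    using assms(3) lp by (simp add: p'_def u_def Cons_nth_drop_Suc)
  have updec: "[1..<n+1] = [1..<v] @ v # u # [v+2..<n+1]"
  proof -
    have "[1..<n+1] = [1..<v] @ [v..<n+1]" using v1 un
      by (intro upt_split) auto
    moreover have "[v..<n+1] = v # u # [v+2..<n+1]" using un uv
      by (simp add: upt_conv_Cons)
    ultimately show ?thesis by simp
  qed
  have d1: "filter (\<lambda>x. x \<noteq> v) p = p' \<and> F v u p' = p"
    using del_dup[of "take j p" v u "drop (j+2) p"] pdec p'dec dp by metis
  have d2: "filter (\<lambda>x. x \<noteq> v) [1..<n+1] = [1..<v] @ u # [v+2..<n+1]
      \<and> F v u ([1..<v] @ u # [v+2..<n+1]) = [1..<n+1]"
    using del_dup[of "[1..<v]" v u "[v+2..<n+1]"] updec by (metis distinct_upt)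
  have gup: "map g [1..<n] = [1..<v] @ u # [v+2..<n+1]"
  proof -
    have "[1..<n] = [1..<v] @ [v..<n]" using v1 un
      by (intro upt_split) auto
    moreover have "map g [1..<v] = [1..<v]" by (rule map_idI) (auto simp: g_def)
    moreover have "map g [v..<n] = map Suc [v..<n]" by (auto simp: g_def)
    moreover have "map Suc [v..<n] = u # [v+2..<n+1]" using un uv
      by (simp add: map_Suc_upt upt_conv_Cons)
    ultimately show ?thesis by simp
  qed
  have gmono: "\<And>a b. g a < g b \<longleftrightarrow> a < b" by (auto simp: g_def)
  have hg: "\<And>x. h (g x) = x" by (auto simp: g_def h_def)
  have mgq: "map g q = p'"
  proof (rule iso_eq)
    have "inj g" using gmono by (metis injI less_irrefl linorder_neqE_nat)
    then show "distinct (map g q)" using dq by (simp add: distinct_map inj_on_def inj_def)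
    have D: "distinct (take j p @ v # u # drop (j+2) p)" using dp pdec by simp
    then show "distinct p'" by (simp add: p'dec)
    have "set p = set (take j p @ v # u # drop (j+2) p)" using pdec by simp
    then have "set p' = set p - {v}" using D by (auto simp: p'dec)
    also have "\<dots> = g ` {1..n-1}"
    proof
      show "g ` {1..n - 1} \<subseteq> set p - {v}" using sp un v1 by (auto simp: g_def)
      show "set p - {v} \<subseteq> g ` {1..n - 1}"
      proof
        fix x assume x: "x \<in> set p - {v}"
        show "x \<in> g ` {1..n - 1}"
        proof (cases "x < v")
          case True then have "g x = x" by (simp add: g_def)
          then show ?thesis using True x sp un by (metis atLeastAtMost_iff Diff_iff image_eqI le_diff_conv2 Suc_leD less_le_trans add.commute one_le_numeral le_trans less_imp_le_nat plus_1_eq_Suc Suc_le_eq)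
        next
          case False then have "x > v" using x by auto
          then have "g (x - 1) = x" by (auto simp: g_def)
          moreover have "x - 1 \<in> {1..n-1}" using \<open>x > v\<close> x sp v1 by auto
          ultimately show ?thesis by (metis image_eqI)
        qed
      qed
    qed
    finally show "set (map g q) = set p'" using sq by simp
    show "order_iso (map g q) p'" using assms(6) gmono unfolding order_iso_def p'_def by auto
  qed
  have ap: "achievable p \<longleftrightarrow> reach [1..<n+1] p" using lp by (simp add: achievable_def reach_def)
  have aq: "achievable q \<longleftrightarrow> reach [1..<n] q" using lq assms(1) by (simp add: achievable_def reach_def)
  show ?thesis
  proof
    assume "achievable p"
    then have "reach [1..<n+1] p" using ap by simp
    then have "reach (map g [1..<n]) (map g q)" using reach_del[of _ p v] d1 d2 gup mgq by metis
    then have "reach (map h (map g [1..<n])) (map h (map g q))" by (rule reach_map)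
    then show "achievable q" using aq hg by (simp add: map_idI)
  next
    assume "achievable q"
    then have "reach [1..<n] q" using aq by simp
    then have "reach (map g [1..<n]) (map g q)" by (rule reach_map)
    then have "reach (F v u (map g [1..<n])) (F v u (map g q))" by (rule reach_dup)
    then show "achievable p" using ap d1 d2 gup mgq by metis
  qed
qed

end
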